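(* There exists an optimal threshold-type age-dependent policy $\phi^*$ of the MDP $\Lambda$ whose action order $(b_1,\dots,b_K)$ satisfies $Q_{b_k}\le Q_{b_{k+1}}$ for all $1\le k<K$; equivalently, $s\mapsto Q_{\phi^*(s)}$ is nondecreasing in the state $s$.
   Context: Fix $N\in\mathbb{N}^+$ vehicle types $\mathcal{N}=\{1,\dots,N\}$ with arrival probabilities $p_n\in(0,1]$, mean operational costs $c_n\ge0$ and mean sensing capabilities $r_n\in(0,1]$. Fix $\beta\in(0,1)$, $\epsilon>0$. Actions: $\mathcal{A}=2^{\mathcal{N}}$. Success probability $Q_\emptyset=0$, $Q_a=1-\prod_{n\in a}(1-r_np_n)$; expected recruitment cost $E_a=\sum_{n\in a}p_nc_n$. Immediate cost at state $\delta\in\mathbb{N}^+$: $u(\delta,a)=(1-\beta)E_a-\beta\epsilon\big(Q_a(\delta^2+2\delta)-(1+\delta)^2\big)$. MDP $\Lambda$: states $\mathbb{N}^+$; from state $s$ under action $a$ move to $1$ w.p. $Q_a$ and to $s+1$ w.p. $1-Q_a$; average cost $V(\phi)=\limsup_{T\to\infty}\frac1T\mathbb{E}^\phi[\sum_{t=1}^Tu(S(t),A(t))]$, $S(1)=1$, to be minimized. A threshold-type age-dependent policy is a deterministic stationary policy $\phi:\mathbb{N}^+\to\mathcal{A}$ for which there are $K\in\mathbb{N}^+$, an action order $(b_1,\dots,b_K)$ of actions with $b_k\ne b_{k+1}$, and integer thresholds $1\le\theta_{b_1\to b_2}\le\dots\le\theta_{b_{K-1}\to b_K}$ such that $\phi(s)=b_k$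 for $\theta_{b_{k-1}\to b_k}\le s<\theta_{b_k\to b_{k+1}}$ (with the conventions $\theta_{b_0\to b_1}=1$, $\theta_{b_K\to b_{K+1}}=\infty$). *)

theory Defs
  imports "HOL-Probability.Probability"
begin

text \<open>Vehicle types are 1..N; an action is a subset of {1..N}; states are positive naturals.\<close>

definition succ_prob :: "(nat \<Rightarrow> real) \<Rightarrow> (nat \<Rightarrow> real) \<Rightarrow> nat set \<Rightarrow> real" where
  "succ_prob p r a = 1 - (\<Prod>n\<in>a. 1 - r n * p n)"

definition recruit_cost :: "(nat \<Rightarrow> real) \<Rightarrow> (nat \<Rightarrow> real) \<Rightarrow> nat set \<Rightarrow> real" where
  "recruit_cost p c a = (\<Sum>n\<in>a. p n * c n)"

definition imm_cost ::
  "(nat \<Rightarrow> real) \<Rightarrow> (nat \<Rightarrow> real) \<Rightarrow> (nat \<Rightarrow> real) \<Rightarrow> real \<Rightarrow> real \<Rightarrow> nat \<Rightarrow> nat set \<Rightarrow> real" where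
  "imm_cost p c r \<beta> \<epsilon> \<delta> a =
     (1 - \<beta>) * recruit_cost p c a
     - \<beta> * \<epsilon> * (succ_prob p r a * (real \<delta> ^ 2 + 2 * real \<delta>) - (1 + real \<delta>) ^ 2)"

definition trans_pmf :: "(nat \<Rightarrow> real) \<Rightarrow> (nat \<Rightarrow> real) \<Rightarrow> nat \<Rightarrow> nat set \<Rightarrow> nat pmf" where
  "trans_pmf p r s a = map_pmf (\<lambda>b. if b then 1 else Suc s) (bernoulli_pmf (succ_prob p r a))"

type_synonym policy = "(nat \<times> nat set) list \<Rightarrow> nat \<Rightarrow> nat set pmf"

definition admissible :: "nat \<Rightarrow> policy \<Rightarrow> bool" where
  "admissible N \<pi> \<longleftrightarrow> (\<forall>h s. set_pmf (\<pi> h s) \<subseteq> Pow {1..N})"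

text \<open>Distribution of (history, current state) at time t+1; S(1) = 1.\<close>
primrec hist :: "(nat \<Rightarrow> real) \<Rightarrow> (nat \<Rightarrow> real) \<Rightarrow> policy \<Rightarrow> nat \<Rightarrow> ((nat \<times> nat set) list \<times> nat) pmf" where
  "hist p r \<pi> 0 = return_pmf ([], 1)"
| "hist p r \<pi> (Suc t) =
     bind_pmf (hist p r \<pi> t) (\<lambda>(h, s). bind_pmf (\<pi> h s)
       (\<lambda>a. map_pmf (\<lambda>s'. (h @ [(s, a)], s')) (trans_pmf p r s a)))"

definition exp_cost ::
  "(nat \<Rightarrow> real) \<Rightarrow> (nat \<Rightarrow> real) \<Rightarrow> (nat \<Rightarrow> real) \<Rightarrow> real \<Rightarrow> real \<Rightarrow> policy \<Rightarrow> nat \<Rightarrow> real" where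
  "exp_cost p c r \<beta> \<epsilon> \<pi> t =
     measure_pmf.expectation (bind_pmf (hist p r \<pi> t) (\<lambda>(h, s). map_pmf (\<lambda>a. (s, a)) (\<pi> h s)))
       (\<lambda>(s, a). imm_cost p c r \<beta> \<epsilon> s a)"

definition avg_cost ::
  "(nat \<Rightarrow> real) \<Rightarrow> (nat \<Rightarrow> real) \<Rightarrow> (nat \<Rightarrow> real) \<Rightarrow> real \<Rightarrow> real \<Rightarrow> policy \<Rightarrow> ereal" where
  "avg_cost p c r \<beta> \<epsilon> \<pi> =
     limsup (\<lambda>T. ereal ((\<Sum>t<T. exp_cost p c r \<beta> \<epsilon> \<pi> t) / real T))"

definition det_policy :: "(nat \<Rightarrow> nat set) \<Rightarrow> policy" where
  "det_policy \<phi> = (\<lambda>h s. return_pmf (\<phi> s))"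

text \<open>Threshold-type age-dependent policy with action order b 1, ..., b K and
  thresholds theta k = theta_{b_(k-1) -> b_k} (k = 2..K), theta 1 = 1,
  theta (K+1) = infinity.\<close>
definition threshold_policy ::
  "nat \<Rightarrow> (nat \<Rightarrow> nat set) \<Rightarrow> nat \<Rightarrow> (nat \<Rightarrow> nat set) \<Rightarrow> (nat \<Rightarrow> nat) \<Rightarrow> bool" where
  "threshold_policy N \<phi> K b \<theta> \<longleftrightarrow>
     K \<ge> 1
   \<and> (\<forall>k\<in>{1..K}. b k \<subseteq> {1..N})
   \<and> (\<forall>k. 1 \<le> k \<and> k < K \<longrightarrow> b k \<noteq> b (Suc k))
   \<and> \<theta> 1 = 1
   \<and> (\<forall>k. 1 \<le> k \<and> k < K \<longrightarrow> \<theta> k \<le> \<theta> (Suc k))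
   \<and> (\<forall>k\<in>{1..K}. \<forall>s \<ge> 1. \<theta> k \<le> s \<and> (k < K \<longrightarrow> s < \<theta> (Suc k)) \<longrightarrow> \<phi> s = b k)"

end

theory Submission
  imports Defs
begin

definition thr_prop :: "(nat \<Rightarrow> 'a) \<Rightarrow> nat \<Rightarrow> (nat \<Rightarrow> 'a) \<Rightarrow> (nat \<Rightarrow> nat) \<Rightarrow> bool" where
  "thr_prop \<phi> K b \<theta> \<longleftrightarrow> K \<ge> 1 \<and> \<theta> 1 = 1
    \<and> (\<forall>k. 1 \<le> k \<and> k < K \<longrightarrow> b k \<noteq> b (Suc k) \<and> \<theta> k < \<theta> (Suc k))
    \<and> (\<forall>k\<in>{1..K}. b k = \<phi> (\<theta> k) \<and> 1 \<le> \<theta> k)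
    \<and> (\<forall>k\<in>{1..K}. \<forall>s\<ge>1. \<theta> k \<le> s \<and> (k < K \<longrightarrow> s < \<theta> (Suc k)) \<longrightarrow> \<phi> s = b k)"

lemma thr_exists:
  fixes \<phi> :: "nat \<Rightarrow> 'a"
  assumes "1 \<le> M" "\<forall>s\<ge>M. \<phi> s = \<phi> M"
  shows "\<exists>K b \<theta>. thr_prop \<phi> K b \<theta>"
  using assms
proof (induction M arbitrary: \<phi> rule: nat_induct_at_least)
  case base
  have "thr_prop \<phi> 1 (\<lambda>_. \<phi> 1) (\<lambda>_. 1)" unfolding thr_prop_def
  proof (intro conjI allI impI ballI)
    fix k s assume "(1::nat) \<le> s"
    then show "\<phi> s = \<phi> 1" using base by blast
  qed auto
  then show ?case by blast
next
  case (Suc M)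
  define \<psi> where "\<psi> = (\<lambda>s. \<phi> (Suc s))"
  have "\<forall>s\<ge>M. \<psi> s = \<psi> M"
  proof (intro allI impI)
    fix s assume "M \<le> s"
    then have "\<phi> (Suc s) = \<phi> (Suc M)" "\<phi> (Suc M) = \<phi> (Suc M)" using Suc.prems by blast+
    then show "\<psi> s = \<psi> M" by (simp add: \<psi>_def)
  qed
  then obtain K b \<theta> where T: "thr_prop \<psi> K b \<theta>" using Suc.IH by blast
  note TT = T[unfolded thr_prop_def]
  have K1: "K \<ge> 1" using TT by (rule conjunct1)
  have t1: "\<theta> 1 = 1" using TT[THEN conjunct2, THEN conjunct1] .
  note stA = TT[THEN conjunct2, THEN conjunct2, THEN conjunct1]
  note bvA = TT[THEN conjunct2, THEN conjunct2, THEN conjunct2, THEN conjunct1]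
  note ivA = TT[THEN conjunct2, THEN conjunct2, THEN conjunct2, THEN conjunct2]
  have st: "b k \<noteq> b (Suc k) \<and> \<theta> k < \<theta> (Suc k)" if "1 \<le> k" "k < K" for k
    using stA that by blast
  have bv: "b k = \<psi> (\<theta> k) \<and> 1 \<le> \<theta> k" if "1 \<le> k" "k \<le> K" for k
  proof -
    have "k \<in> {1..K}" using that by simp
    then show ?thesis using bvA by blast
  qed
  have iv: "\<psi> s = b k" if "1 \<le> k" "k \<le> K" "1 \<le> s" "\<theta> k \<le> s" "k < K \<longrightarrow> s < \<theta> (Suc k)" for k s
  proof -
    have kin: "k \<in> {1..K}" using that by simp
    show ?thesis using ivA[rule_format, OF kin that(3)] that(4,5) by blast
  qed
  have b1: "b 1 = \<phi> 2" using bv[of 1] K1 t1 by (simp add: \<psi>_def numeral_2_eq_2)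
  show ?case
  proof (cases "\<phi> 1 = \<phi> 2")
    case True
    define \<theta>' where "\<theta>' = (\<lambda>k. if k \<le> 1 then 1 else Suc (\<theta> k))"
    have "thr_prop \<phi> K b \<theta>'"
      unfolding thr_prop_def
    proof (intro conjI allI impI ballI)
      show "1 \<le> K" by (rule K1)
      show "\<theta>' 1 = 1" by (simp add: \<theta>'_def)
      fix k assume k: "1 \<le> k \<and> k < K"
      then show "b k \<noteq> b (Suc k)" using st by blast
      show "\<theta>' k < \<theta>' (Suc k)" using st[of k] k by (cases "k = 1") (auto simp: \<theta>'_def)
    next
      fix k assume k: "k \<in> {1..K}"
      show "b k = \<phi> (\<theta>' k)" using bv[of k] k True b1 t1
        by (cases "k = 1") (auto simp: \<theta>'_def \<psi>_def)
      show "1 \<le> \<theta>' k" by (simp add: \<theta>'_def)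
    next
      fix k s assume k: "k \<in> {1..K}" and s: "1 \<le> s"
        and h: "\<theta>' k \<le> s \<and> (k < K \<longrightarrow> s < \<theta>' (Suc k))"
      show "\<phi> s = b k"
      proof (cases "s = 1")
        case True
        then have "k = 1" using h k bv[of k] by (cases "k \<le> 1") (auto simp: \<theta>'_def)
        then show ?thesis using True b1 \<open>\<phi> 1 = \<phi> 2\<close> by simp
      next
        case False
        then obtain s0 where s0: "s = Suc s0" "1 \<le> s0" using s by (cases s) auto
        have "\<theta> k \<le> s0" using h k t1 s0 by (cases "k \<le> 1") (auto simp: \<theta>'_def)
        moreover have "k < K \<longrightarrow> s0 < \<theta> (Suc k)" using h k s0 by (auto simp: \<theta>'_def)
        ultimately have "\<psi> s0 = b k" using iv[of k s0] k s0 by auto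
        then show ?thesis using s0 by (simp add: \<psi>_def)
      qed
    qed
    then show ?thesis by blast
  next
    case False
    define \<theta>' where "\<theta>' = (\<lambda>k. if k \<le> 1 then 1 else Suc (\<theta> (k - 1)))"
    define b' where "b' = (\<lambda>k. if k \<le> 1 then \<phi> 1 else b (k - 1))"
    have "thr_prop \<phi> (Suc K) b' \<theta>'"
      unfolding thr_prop_def
    proof (intro conjI allI impI ballI)
      show "1 \<le> Suc K" by simp
      show "\<theta>' 1 = 1" by (simp add: \<theta>'_def)
      fix k assume k: "1 \<le> k \<and> k < Suc K"
      show "b' k \<noteq> b' (Suc k)"
      proof (cases "k = 1")
        case True then show ?thesis using False b1 by (simp add: b'_def)
      next
        case False
        then have "1 \<le> k - 1" "k - 1 < K" using k by auto
        then have "b (k - 1) \<noteq> b (Suc (k - 1))" using st by blast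
        then show ?thesis using False k by (simp add: b'_def)
      qed
      show "\<theta>' k < \<theta>' (Suc k)"
      proof (cases "k = 1")
        case True then show ?thesis using t1 by (simp add: \<theta>'_def)
      next
        case False
        then have "1 \<le> k - 1" "k - 1 < K" using k by auto
        then have "\<theta> (k - 1) < \<theta> (Suc (k - 1))" using st by blast
        then show ?thesis using False k by (simp add: \<theta>'_def)
      qed
    next
      fix k assume k: "k \<in> {1..Suc K}"
      show "b' k = \<phi> (\<theta>' k)"
      proof (cases "k = 1")
        case True then show ?thesis by (simp add: b'_def \<theta>'_def)
      next
        case False
        then have "1 \<le> k - 1" "k - 1 \<le> K" using k by auto
        then have "b (k - 1) = \<psi> (\<theta> (k - 1))" using bv by blast
        then show ?thesis using False k by (simp add: b'_def \<theta>'_def \<psi>_def)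
      qed
      show "1 \<le> \<theta>' k" by (simp add: \<theta>'_def)
    next
      fix k s assume k: "k \<in> {1..Suc K}" and s: "1 \<le> s"
        and h: "\<theta>' k \<le> s \<and> (k < Suc K \<longrightarrow> s < \<theta>' (Suc k))"
      show "\<phi> s = b' k"
      proof (cases "k = 1")
        case True
        then have "s < 2" using h K1 t1 by (simp add: \<theta>'_def)
        then have "s = 1" using s by simp
        then show ?thesis using True by (simp add: b'_def)
      next
        case False
        then have k1: "1 \<le> k - 1" "k - 1 \<le> K" using k by auto
        have "Suc (\<theta> (k - 1)) \<le> s" using h False k by (simp add: \<theta>'_def)
        then obtain s0 where s0: "s = Suc s0" "\<theta> (k - 1) \<le> s0" by (cases s) auto
        have "1 \<le> s0" using s0 bv[OF k1] by simp
        moreover have "k - 1 < K \<longrightarrow> s0 < \<theta> (Suc (k - 1))"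
          using h False k s0 by (auto simp: \<theta>'_def)
        ultimately have "\<psi> s0 = b (k - 1)" using iv[OF k1] s0 by auto
        then show ?thesis using s0 False k by (simp add: \<psi>_def b'_def)
      qed
    qed
    then show ?thesis by blast
  qed
qed

lemma cont_Min:
  fixes f :: "'a \<Rightarrow> 'b::t2_space \<Rightarrow> real"
  assumes "finite S" "S \<noteq> {}" "\<forall>a\<in>S. isCont (f a) x"
  shows "isCont (\<lambda>z. Min ((\<lambda>a. f a z) ` S)) x"
  using assms
proof (induction S rule: finite_ne_induct)
  case (singleton a) then show ?case by simp
next
  case (insert a F)
  have eq: "(\<lambda>z. Min ((\<lambda>a. f a z) ` insert a F)) = (\<lambda>z. min (f a z) (Min ((\<lambda>a. f a z) ` F)))"
    using insert by (auto intro!: ext simp: Min_insert)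
  show ?case unfolding eq using insert by (intro continuous_min) auto
qed

lemma Min_img_mono:
  fixes f g :: "'a \<Rightarrow> real"
  assumes "finite S" "S \<noteq> {}" "\<And>a. a\<in>S \<Longrightarrow> f a \<le> g a"
  shows "Min (f`S) \<le> Min (g`S)"
proof -
  have "Min (g`S) \<in> g`S" using assms by (intro Min_in) auto
  then obtain a where a: "a \<in> S" "g a = Min (g`S)" by auto
  have "Min (f`S) \<le> f a" using assms a by (intro Min_le) auto
  then show ?thesis using assms(3)[OF a(1)] a by linarith
qed

primrec Gk :: "(real \<Rightarrow> nat \<Rightarrow> real \<Rightarrow> real) \<Rightarrow> (real \<Rightarrow> nat \<Rightarrow> real) \<Rightarrow> real \<Rightarrow> nat \<Rightarrow> nat \<Rightarrow> real" where
  "Gk F T l 0 s = T l s"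
| "Gk F T l (Suc k) s = F l s (Gk F T l k (Suc s))"

locale mdp =
  fixes N :: nat and p c r :: "nat \<Rightarrow> real" and \<beta> \<epsilon> :: real
  assumes N1: "N \<ge> 1"
    and pp: "\<forall>n\<in>{1..N}. 0 < p n \<and> p n \<le> 1"
    and cc: "\<forall>n\<in>{1..N}. 0 \<le> c n"
    and rr: "\<forall>n\<in>{1..N}. 0 < r n \<and> r n \<le> 1"
    and b0: "0 < \<beta>" and b1: "\<beta> < 1" and e0: "0 < \<epsilon>"
begin

definition "AA = Pow {1..N}"
abbreviation "Q \<equiv> succ_prob p r"
definition "Cc a = (1-\<beta>) * recruit_cost p c a + \<beta> * \<epsilon>"
definition "w (s::nat) = real s ^ 2 + 2 * real s"
abbreviation "be \<equiv> \<beta> * \<epsilon>"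

lemma AA_fin: "finite AA" and AA_ne: "AA \<noteq> {}"
  by (auto simp: AA_def)

lemma Q_range: "a \<in> AA \<Longrightarrow> 0 \<le> Q a \<and> Q a \<le> 1"
proof -
  assume a: "a \<in> AA"
  have f: "\<forall>n\<in>a. 0 \<le> 1 - r n * p n \<and> 1 - r n * p n \<le> 1"
  proof
    fix n assume "n \<in> a"
    then have "n \<in> {1..N}" using a by (auto simp: AA_def)
    then have "0 < p n" "p n \<le> 1" "0 < r n" "r n \<le> 1" using pp rr by auto
    moreover have "r n * p n \<le> 1 * 1" using calculation by (intro mult_mono) auto
    ultimately show "0 \<le> 1 - r n * p n \<and> 1 - r n * p n \<le> 1" by auto
  qed
  have "0 \<le> (\<Prod>n\<in>a. 1 - r n * p n)" using f by (intro prod_nonneg) auto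
  moreover have "(\<Prod>n\<in>a. 1 - r n * p n) \<le> 1" using f by (intro prod_le_1) auto
  ultimately show ?thesis by (simp add: succ_prob_def)
qed

lemma C_nonneg: "a \<in> AA \<Longrightarrow> 0 \<le> Cc a"
proof -
  assume a: "a \<in> AA"
  have "\<forall>n\<in>a. 0 \<le> p n * c n"
  proof
    fix n assume "n \<in> a"
    then have "n \<in> {1..N}" using a by (auto simp: AA_def)
    then show "0 \<le> p n * c n" using pp cc by (simp add: less_imp_le)
  qed
  then have "0 \<le> recruit_cost p c a" unfolding recruit_cost_def by (intro sum_nonneg) auto
  then show ?thesis unfolding Cc_def using b0 b1 e0 by auto
qed

lemma C_pos: "a \<in> AA \<Longrightarrow> be \<le> Cc a"
proof -
  assume a: "a \<in> AA"
  have "\<forall>n\<in>a. 0 \<le> p n * c n"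
  proof
    fix n assume "n \<in> a"
    then have "n \<in> {1..N}" using a by (auto simp: AA_def)
    then show "0 \<le> p n * c n" using pp cc by (simp add: less_imp_le)
  qed
  then have "0 \<le> recruit_cost p c a" unfolding recruit_cost_def by (intro sum_nonneg) auto
  then show ?thesis unfolding Cc_def using b0 b1 e0 by auto
qed

lemma U_eq: "imm_cost p c r \<beta> \<epsilon> s a = Cc a + be * (1 - Q a) * w s"
  unfolding imm_cost_def Cc_def w_def by (simp add: algebra_simps power2_eq_square)

lemma w_mono: "s \<le> s' \<Longrightarrow> w s \<le> w s'"
  unfolding w_def by (intro add_mono power_mono) auto

lemma w_smono: "s < s' \<Longrightarrow> w s < w s'"
  unfolding w_def by (intro add_less_le_mono power_strict_mono) auto

lemma w_ge: "real s \<le> w s"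
  unfolding w_def by auto

lemma part1: "\<exists>g h \<phi> M Ah Bh. 0 \<le> g \<and> h 1 = 0 \<and> (\<forall>s. h s \<le> h (Suc s))
   \<and> (\<forall>s. \<forall>a\<in>AA. g + h s \<le> Cc a + (1 - Q a) * (be * w s + h (Suc s)))
   \<and> (\<forall>s. \<phi> s \<in> AA \<and> g + h s = Cc (\<phi> s) + (1 - Q (\<phi> s)) * (be * w s + h (Suc s)))
   \<and> 1 \<le> M \<and> (\<forall>s\<ge>M. \<phi> s = \<phi> M)
   \<and> (\<forall>s s'. 1 \<le> s \<longrightarrow> s \<le> s' \<longrightarrow> Q (\<phi> s) \<le> Q (\<phi> s'))
   \<and> 0 \<le> Ah \<and> (\<forall>s. h s \<le> Ah * (real s ^ 2 - 1) + Bh)"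
proof -
  have be0: "0 < be" using b0 e0 by simp
  define q where "q = Max (Q ` AA)"
  have qin: "q \<in> Q ` AA" unfolding q_def using AA_fin AA_ne by (intro Max_in) auto
  have qmax: "\<forall>a\<in>AA. Q a \<le> q" unfolding q_def using AA_fin by auto
  have "{1} \<in> AA" using N1 by (auto simp: AA_def)
  moreover have "Q {1} = r 1 * p 1" by (simp add: succ_prob_def)
  moreover have "0 < r 1 * p 1" using pp rr N1 by auto
  ultimately have q0: "0 < q" using qmax by force
  have q1: "q \<le> 1" using qin Q_range by auto
  define S where "S = {a\<in>AA. Q a = q}"
  have Sfin: "finite S" and Sne: "S \<noteq> {}" using AA_fin qin by (auto simp: S_def)
  have "Min (Cc ` S) \<in> Cc ` S" using Sfin Sne by (intro Min_in) auto
  then obtain as where asS: "as \<in> S" "Cc as = Min (Cc ` S)" by auto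
  have as: "as \<in> AA" "Q as = q" "\<forall>a\<in>AA. Q a = q \<longrightarrow> Cc as \<le> Cc a"
    using asS Sfin by (auto simp: S_def)
  define Cs where "Cs = Cc as"
  have Cs0: "0 \<le> Cs" using C_nonneg as by (simp add: Cs_def)
  define \<alpha> where "\<alpha> = (1-q)*be/q"
  define \<gamma> where "\<gamma> = 2*(1-q)*(be+\<alpha>)/q"
  define \<kappa> where "\<kappa> = (\<lambda>l. (Cs - l + (1-q)*(\<alpha>+\<gamma>))/q)"
  define T where "T = (\<lambda>l (s::nat). \<alpha>*real s^2 + \<gamma>*real s + \<kappa> l)"
  have a0: "0 \<le> \<alpha>" unfolding \<alpha>_def using q0 q1 be0 by simp
  have g0: "0 \<le> \<gamma>" unfolding \<gamma>_def using q0 q1 be0 a0 by simp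
  have Tid: "T l s = Cs - l + (1-q)*(be*w s + T l (Suc s))" for l s
  proof -
    have "q * T l s = q * (Cs - l + (1-q)*(be*w s + T l (Suc s)))"
      unfolding T_def \<kappa>_def w_def using q0
      by (simp add: \<gamma>_def \<alpha>_def field_simps power2_eq_square)
    then show ?thesis using q0 by simp
  qed
  have Tlow: "- l / q \<le> T l s" for l s
  proof -
    have "(Cs - l)/q \<le> \<kappa> l" unfolding \<kappa>_def using q0 q1 a0 g0
      by (intro divide_right_mono) auto
    moreover have "- l / q \<le> (Cs - l)/q" using Cs0 q0 by (intro divide_right_mono) auto
    moreover have "\<kappa> l \<le> T l s" unfolding T_def using a0 g0 by simp
    ultimately show ?thesis by linarith
  qed
  have Tmono: "T l s \<le> T l (Suc s)" for l s
  proof -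
    have "\<alpha>*real s^2 \<le> \<alpha>*real (Suc s)^2" using a0 by (intro mult_left_mono power_mono) auto
    moreover have "\<gamma>*real s \<le> \<gamma>*real (Suc s)" using g0 by (intro mult_left_mono) auto
    ultimately show ?thesis unfolding T_def by linarith
  qed
  define G0 where "G0 = \<alpha> + \<gamma> + Cs"
  have G00: "0 \<le> G0" using a0 g0 Cs0 by (simp add: G0_def)
  have TG0: "T G0 1 = 0" unfolding T_def \<kappa>_def G0_def using q0 by (simp add: field_simps)
  define Bd where "Bd = (\<Sum>a\<in>AA. \<bar>(Cs - Cc a)/(q - Q a)\<bar>)"
  define M where "M = nat \<lceil>(Bd + G0/q)/be\<rceil> + 1"
  have M1: "1 \<le> M" by (simp add: M_def)
  have wM: "Bd + G0/q \<le> be * w s" if "M \<le> s" for s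
  proof -
    have "(Bd + G0/q)/be \<le> real M" unfolding M_def by linarith
    also have "\<dots> \<le> w s" using that w_ge[of s] by linarith
    finally show ?thesis using be0 by (simp add: pos_divide_le_eq mult.commute)
  qed
  define Fm where "Fm = (\<lambda>l s y. Min ((\<lambda>a. Cc a + (1 - Q a)*(be*w s + y)) ` AA) - l)"
  have tailopt: "Cs + (1-q)*(be*w s + T l (Suc s)) \<le> Cc a + (1 - Q a)*(be*w s + T l (Suc s))"
    if "0 \<le> l" "l \<le> G0" "M \<le> s" "a \<in> AA" for l s a
  proof -
    define X where "X = be*w s + T l (Suc s)"
    have "- G0/q \<le> - l/q" using that q0 by (intro divide_right_mono) auto
    then have XB: "Bd \<le> X" using wM[OF that(3)] Tlow[of l "Suc s"] unfolding X_def by linarith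
    have "(1 - Q a)*X - (1-q)*X = (q - Q a)*X" by (simp add: algebra_simps)
    moreover have "Cs - Cc a \<le> (q - Q a)*X"
    proof (cases "Q a = q")
      case True then show ?thesis using as that(4) by (simp add: Cs_def)
    next
      case False
      then have lt: "0 < q - Q a" using qmax that(4) by force
      have "(Cs - Cc a)/(q - Q a) \<le> \<bar>(Cs - Cc a)/(q - Q a)\<bar>" by (rule abs_ge_self)
      also have "\<dots> \<le> Bd" unfolding Bd_def using AA_fin that(4)
        by (intro member_le_sum) auto
      finally have "(Cs - Cc a)/(q - Q a) \<le> X" using XB by linarith
      then show ?thesis using lt by (simp add: pos_divide_le_eq mult.commute)
    qed
    ultimately show ?thesis unfolding X_def by linarith
  qed
  have Fm_tail: "Fm l s (T l (Suc s)) = T l s" if "0 \<le> l" "l \<le> G0" "M \<le> s" for l s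
  proof -
    have "Min ((\<lambda>a. Cc a + (1 - Q a)*(be*w s + T l (Suc s))) ` AA) = Cs + (1-q)*(be*w s + T l (Suc s))"
      using tailopt[OF that] as AA_fin by (intro Min_eqI) (auto simp: Cs_def)
    then show ?thesis unfolding Fm_def using Tid[of l s] by simp
  qed
  define H where "H = (\<lambda>l s. Gk Fm T l (M - s) s)"
  have cont: "isCont (\<lambda>l. Gk Fm T l k s) l0" for k s l0
  proof (induction k arbitrary: s)
    case 0 then show ?case unfolding T_def \<kappa>_def using q0 by (simp; intro continuous_intros; simp)
  next
    case (Suc k)
    have "isCont (\<lambda>l. Min ((\<lambda>a. Cc a + (1 - Q a)*(be*w s + Gk Fm T l k (Suc s))) ` AA)) l0"
      by (rule cont_Min[OF AA_fin AA_ne]) (auto intro!: continuous_intros Suc.IH)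
    then show ?case unfolding Fm_def by (simp; intro continuous_intros)
  qed
  have Gk0: "0 \<le> Gk Fm T 0 k s" for k s
  proof (induction k arbitrary: s)
    case 0
    have "0 \<le> \<kappa> 0" unfolding \<kappa>_def using Cs0 q0 q1 a0 g0 by simp
    then show ?case unfolding T_def using a0 g0 by simp
  next
    case (Suc k)
    have "\<forall>x\<in>(\<lambda>a. Cc a + (1 - Q a)*(be*w s + Gk Fm T 0 k (Suc s))) ` AA. 0 \<le> x"
    proof
      fix x assume "x \<in> (\<lambda>a. Cc a + (1 - Q a)*(be*w s + Gk Fm T 0 k (Suc s))) ` AA"
      then obtain a where a: "a \<in> AA" "x = Cc a + (1 - Q a)*(be*w s + Gk Fm T 0 k (Suc s))" by auto
      have "0 \<le> w s" unfolding w_def by simp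
      then have "0 \<le> (1 - Q a)*(be*w s + Gk Fm T 0 k (Suc s))"
        using Q_range[OF a(1)] Suc.IH[of "Suc s"] be0 by (intro mult_nonneg_nonneg) auto
      then show "0 \<le> x" using a C_nonneg[OF a(1)] by simp
    qed
    then show ?case unfolding Fm_def using AA_fin AA_ne by (simp add: Min_ge_iff)
  qed
  have GkT: "Gk Fm T l k s \<le> T l s" for k s l
  proof (induction k arbitrary: s)
    case 0 then show ?case by simp
  next
    case (Suc k)
    have "Fm l s (Gk Fm T l k (Suc s)) \<le> Cs + (1-q)*(be*w s + Gk Fm T l k (Suc s)) - l"
      unfolding Fm_def using as AA_fin by (simp add: Cs_def; intro Min_le) auto
    also have "\<dots> \<le> Cs + (1-q)*(be*w s + T l (Suc s)) - l"
      using Suc.IH[of "Suc s"] q1 by (simp add: mult_left_mono)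
    finally show ?case using Tid[of l s] by simp
  qed
  have "\<exists>x. 0 \<le> x \<and> x \<le> G0 \<and> H x 1 = 0"
  proof (rule IVT2[of "\<lambda>l. H l 1"])
    show "H G0 1 \<le> 0" using GkT[of G0 "M - 1" 1] TG0 by (simp add: H_def)
    show "0 \<le> H 0 1" using Gk0 by (simp add: H_def)
    show "0 \<le> G0" by (rule G00)
    show "\<forall>x. 0 \<le> x \<and> x \<le> G0 \<longrightarrow> isCont (\<lambda>l. H l 1) x" unfolding H_def using cont by blast
  qed
  then obtain g where g: "0 \<le> g" "g \<le> G0" "H g 1 = 0" by blast
  define h where "h = H g"
  have htail: "h s = T g s" if "M \<le> s" for s using that by (simp add: h_def H_def)
  have hrec: "h s = Fm g s (h (Suc s))" for s
  proof (cases "s < M")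
    case True
    then have "M - s = Suc (M - Suc s)" by simp
    then show ?thesis by (simp add: h_def H_def)
  next
    case False
    then show ?thesis using htail[of s] htail[of "Suc s"] Fm_tail[OF g(1,2), of s] by simp
  qed
  have Fm_mono: "Fm g s y \<le> Fm g (Suc s) y'" if "y \<le> y'" for s y y'
  proof -
    have "Min ((\<lambda>a. Cc a + (1 - Q a)*(be*w s + y)) ` AA) \<le> Min ((\<lambda>a. Cc a + (1 - Q a)*(be*w (Suc s) + y')) ` AA)"
    proof (rule Min_img_mono[OF AA_fin AA_ne])
      fix a assume a: "a \<in> AA"
      have "be*w s \<le> be*w (Suc s)" by (rule mult_left_mono[OF w_mono]) (use be0 in auto)
      then have "(1 - Q a)*(be*w s + y) \<le> (1 - Q a)*(be*w (Suc s) + y')"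
        using Q_range[OF a] that by (intro mult_left_mono) auto
      then show "Cc a + (1 - Q a)*(be*w s + y) \<le> Cc a + (1 - Q a)*(be*w (Suc s) + y')" by simp
    qed
    then show ?thesis unfolding Fm_def by simp
  qed
  have hmono_d: "\<forall>s. M - s = d \<longrightarrow> h s \<le> h (Suc s)" for d
  proof (induction d)
    case 0
    show ?case
    proof (intro allI impI)
      fix s assume "M - s = 0"
      then have "M \<le> s" by simp
      then show "h s \<le> h (Suc s)" using htail[of s] htail[of "Suc s"] Tmono[of g s] by simp
    qed
  next
    case (Suc d)
    show ?case
    proof (intro allI impI)
      fix s assume "M - s = Suc d"
      then have "M - Suc s = d" by simp
      then have "h (Suc s) \<le> h (Suc (Suc s))" using Suc.IH by blast
      then have "Fm g s (h (Suc s)) \<le> Fm g (Suc s) (h (Suc (Suc s)))" by (rule Fm_mono)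
      then show "h s \<le> h (Suc s)" using hrec[of s] hrec[of "Suc s"] by linarith
    qed
  qed
  have hmono: "h s \<le> h (Suc s)" for s using hmono_d by blast
  define V where "V = (\<lambda>s a. Cc a + (1 - Q a)*(be*w s + h (Suc s)))"
  have hV: "g + h s = Min (V s ` AA)" for s using hrec[of s] by (simp add: Fm_def V_def)
  have exmin: "\<exists>a. a \<in> AA \<and> (\<forall>b\<in>AA. V s a \<le> V s b)" for s
  proof -
    have "Min (V s ` AA) \<in> V s ` AA" using AA_fin AA_ne by (intro Min_in) auto
    then obtain a where "a \<in> AA" "V s a = Min (V s ` AA)" by auto
    moreover have "\<forall>b\<in>AA. Min (V s ` AA) \<le> V s b" using AA_fin by simp
    ultimately show ?thesis by metis
  qed
  define \<phi> where "\<phi> = (\<lambda>s. if s < M then (SOME a. a \<in> AA \<and> (\<forall>b\<in>AA. V s a \<le> V s b)) else as)"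
  have phimin: "\<phi> s \<in> AA \<and> (\<forall>b\<in>AA. V s (\<phi> s) \<le> V s b)" for s
  proof (cases "s < M")
    case True then show ?thesis unfolding \<phi>_def using someI_ex[OF exmin[of s]] by simp
  next
    case False
    then have "M \<le> s" by simp
    then have "\<forall>b\<in>AA. V s as \<le> V s b" unfolding V_def
      using htail[of "Suc s"] tailopt[OF g(1,2)] as by (simp add: Cs_def)
    then show ?thesis unfolding \<phi>_def using False as by simp
  qed
  have heq: "g + h s = V s (\<phi> s)" for s
  proof -
    have "Min (V s ` AA) = V s (\<phi> s)" using phimin[of s] AA_fin by (intro Min_eqI) auto
    then show ?thesis using hV by simp
  qed
  have bell: "g + h s \<le> V s a" if "a \<in> AA" for s a
    using hV[of s] that AA_fin by (simp add: Min_le)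
  have Qmono: "Q (\<phi> s) \<le> Q (\<phi> s')" if "1 \<le> s" "s \<le> s'" for s s'
  proof (cases "s = s'")
    case True then show ?thesis by simp
  next
    case False
    then have ss: "s < s'" using that by simp
    show ?thesis
    proof (cases "M \<le> s'")
      case True
      then show ?thesis using qmax phimin[of s] as by (simp add: \<phi>_def)
    next
      case False
      define a1 where "a1 = \<phi> s"
      define a2 where "a2 = \<phi> s'"
      have "h (Suc s) \<le> h (Suc s')" by (rule lift_Suc_mono_le[of h, OF hmono]) (use ss in auto)
      moreover have "be * w s < be * w s'" by (rule mult_strict_left_mono[OF w_smono[OF ss] be0])
      ultimately have XX: "be*w s + h (Suc s) < be*w s' + h (Suc s')" by linarith
      have i1: "V s a1 \<le> V s a2" using phimin[of s] phimin[of s'] by (simp add: a1_def a2_def)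
      have i2: "V s' a2 \<le> V s' a1" using phimin[of s] phimin[of s'] by (simp add: a1_def a2_def)
      have idn: "(Q a1 - Q a2)*((be*w s' + h (Suc s')) - (be*w s + h (Suc s))) =
         ((1-Q a2)*(be*w s' + h (Suc s')) + (1 - Q a1)*(be*w s + h (Suc s))) -
         ((1-Q a2)*(be*w s + h (Suc s)) + (1 - Q a1)*(be*w s' + h (Suc s')))"
        by algebra
      show ?thesis
      proof (rule ccontr)
        assume "\<not> Q (\<phi> s) \<le> Q (\<phi> s')"
        then have "0 < Q a1 - Q a2" by (simp add: a1_def a2_def)
        then have "0 < (Q a1 - Q a2)*((be*w s' + h (Suc s')) - (be*w s + h (Suc s)))"
          using XX by (intro mult_pos_pos) auto
        then show False using i1 i2 idn unfolding V_def by linarith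
      qed
    qed
  qed
  define Ah where "Ah = \<alpha> + \<gamma>"
  define Bh where "Bh = Ah + \<bar>\<kappa> g\<bar> + \<bar>h M\<bar>"
  have Ah0: "0 \<le> Ah" using a0 g0 by (simp add: Ah_def)
  have hbound: "h s \<le> Ah * (real s ^ 2 - 1) + Bh" for s
  proof (cases "M \<le> s")
    case True
    have "real s \<le> real s ^ 2" by (cases s) (auto simp: power2_eq_square)
    then have "\<gamma> * real s \<le> \<gamma> * real s ^ 2" using g0 by (intro mult_left_mono) auto
    then have "T g s \<le> Ah * real s ^ 2 + \<bar>\<kappa> g\<bar>" unfolding T_def Ah_def by (simp add: algebra_simps)
    then show ?thesis using htail[OF True] by (simp add: Bh_def algebra_simps)
  next
    case False
    have "h s \<le> h M" by (rule lift_Suc_mono_le[of h, OF hmono]) (use False in auto)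
    moreover have "0 \<le> Ah * real s ^ 2" using Ah0 by simp
    ultimately show ?thesis by (simp add: Bh_def algebra_simps)
  qed
  have h1: "h 1 = 0" using g(3) by (simp add: h_def)
  have phM: "\<forall>s\<ge>M. \<phi> s = \<phi> M" by (simp add: \<phi>_def)
  have bell': "\<forall>s. \<forall>a\<in>AA. g + h s \<le> Cc a + (1 - Q a) * (be * w s + h (Suc s))"
    using bell unfolding V_def by blast
  have heq': "\<forall>s. \<phi> s \<in> AA \<and> g + h s = Cc (\<phi> s) + (1 - Q (\<phi> s)) * (be * w s + h (Suc s))"
    using heq phimin unfolding V_def by blast
  show ?thesis
    apply (rule exI[of _ g], rule exI[of _ h], rule exI[of _ \<phi>], rule exI[of _ M], rule exI[of _ Ah], rule exI[of _ Bh])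
    using g(1) h1 hmono bell' heq' M1 phM Qmono Ah0 hbound by blast
qed

end

lemma E_mono_fin:
  fixes f g :: "'a \<Rightarrow> real"
  assumes "finite (set_pmf M)" "\<And>x. x \<in> set_pmf M \<Longrightarrow> f x \<le> g x"
  shows "measure_pmf.expectation M f \<le> measure_pmf.expectation M g"
  using assms by (intro integral_mono_AE) (auto simp: AE_measure_pmf_iff integrable_measure_pmf_finite)

lemma rec_bound:
  fixes cs :: "nat \<Rightarrow> real"
  assumes h: "\<forall>T. (\<Sum>t<Suc T. cs t) + \<kappa> * cs T \<ge> real (Suc T) * g - B"
    and k0: "0 \<le> \<kappa>" and R0: "0 \<le> \<kappa>*g + B"
  shows "(\<Sum>t<T. cs t) \<ge> real T * g - (\<kappa>*g + B)"
proof (induction T)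
  case 0 then show ?case using R0 by simp
next
  case (Suc T)
  define R where "R = \<kappa>*g + B"
  have IH: "(\<Sum>t<T. cs t) \<ge> real T * g - R" using Suc.IH by (simp add: R_def)
  have k: "\<kappa> * (\<Sum>t<T. cs t) \<ge> \<kappa> * (real T * g - R)" using IH k0 by (rule mult_left_mono)
  have hT: "(\<Sum>t<T. cs t) + cs T + \<kappa> * cs T \<ge> real (Suc T) * g - B" using h[rule_format, of T] by simp
  have "(1+\<kappa>) * ((\<Sum>t<T. cs t) + cs T) \<ge> (1+\<kappa>) * (real (Suc T) * g - R)"
    using k hT unfolding R_def by (simp add: algebra_simps)
  then have "(\<Sum>t<T. cs t) + cs T \<ge> real (Suc T) * g - R" using k0
    by (simp add: mult_le_cancel_left_pos)
  then show ?case by (simp add: R_def)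
qed

context mdp begin

definition "mu \<pi> t = bind_pmf (hist p r \<pi> t) (\<lambda>(h,s). map_pmf (\<lambda>a. (s,a)) (\<pi> h s))"
definition "nu \<pi> t = map_pmf snd (hist p r \<pi> t)"

lemma trans_supp: "set_pmf (trans_pmf p r s a) \<subseteq> {1, Suc s}"
  by (auto simp: trans_pmf_def)

lemma hist_supp: "admissible N \<pi> \<Longrightarrow> x \<in> set_pmf (hist p r \<pi> t) \<Longrightarrow> 1 \<le> snd x \<and> snd x \<le> Suc t"
proof (induction t arbitrary: x)
  case 0 then show ?case by simp
next
  case (Suc t)
  from Suc.prems(2) obtain h s a s' where hs: "(h,s) \<in> set_pmf (hist p r \<pi> t)"
    and s': "s' \<in> set_pmf (trans_pmf p r s a)" and x: "x = (h @ [(s,a)], s')"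
    by (auto simp: split_beta)
  have "s \<le> Suc t" using Suc.IH[OF Suc.prems(1) hs] by simp
  then show ?case using trans_supp[of s a] s' x by auto
qed

lemma mu_supp: "admissible N \<pi> \<Longrightarrow> x \<in> set_pmf (mu \<pi> t) \<Longrightarrow> fst x \<in> {1..Suc t} \<and> snd x \<in> AA"
proof -
  assume adm: "admissible N \<pi>" and x: "x \<in> set_pmf (mu \<pi> t)"
  from x obtain h s a where hs: "(h,s) \<in> set_pmf (hist p r \<pi> t)" and a: "a \<in> set_pmf (\<pi> h s)"
    and xe: "x = (s,a)" by (auto simp: mu_def split_beta)
  have "1 \<le> s \<and> s \<le> Suc t" using hist_supp[OF adm hs] by simp
  moreover have "a \<in> AA" using adm a by (auto simp: admissible_def AA_def)
  ultimately show ?thesis using xe by simp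
qed

lemma mu_fin: "admissible N \<pi> \<Longrightarrow> finite (set_pmf (mu \<pi> t))"
proof -
  assume adm: "admissible N \<pi>"
  have "set_pmf (mu \<pi> t) \<subseteq> {1..Suc t} \<times> AA" using mu_supp[OF adm] by force
  then show ?thesis by (rule finite_subset) (use AA_fin in auto)
qed

lemma nu_mu: "nu \<pi> t = map_pmf fst (mu \<pi> t)"
  unfolding nu_def mu_def by (simp add: map_bind_pmf map_pmf_comp split_beta) (simp add: map_pmf_def)

lemma nu_supp: "admissible N \<pi> \<Longrightarrow> s \<in> set_pmf (nu \<pi> t) \<Longrightarrow> 1 \<le> s \<and> s \<le> Suc t"
  using hist_supp unfolding nu_def by force

lemma nu_fin: "admissible N \<pi> \<Longrightarrow> finite (set_pmf (nu \<pi> t))"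
proof -
  assume adm: "admissible N \<pi>"
  have "set_pmf (nu \<pi> t) \<subseteq> {1..Suc t}" using nu_supp[OF adm] by force
  then show ?thesis by (rule finite_subset) auto
qed

lemma nu_Suc: "nu \<pi> (Suc t) = bind_pmf (mu \<pi> t) (\<lambda>x. trans_pmf p r (fst x) (snd x))"
  unfolding nu_def mu_def
  by (simp add: map_bind_pmf bind_assoc_pmf bind_map_pmf split_beta map_pmf_comp)

lemma nu_0: "nu \<pi> 0 = return_pmf 1"
  by (simp add: nu_def)

lemma E_trans: "a \<in> AA \<Longrightarrow> measure_pmf.expectation (trans_pmf p r s a) f = Q a * f 1 + (1 - Q a) * f (Suc s)"
  using Q_range[of a] by (simp add: trans_pmf_def)

lemma E_nu_Suc:
  assumes adm: "admissible N \<pi>"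
  shows "measure_pmf.expectation (nu \<pi> (Suc t)) f =
     measure_pmf.expectation (mu \<pi> t) (\<lambda>x. Q (snd x) * f 1 + (1 - Q (snd x)) * f (Suc (fst x)))"
proof -
  have fin: "finite (set_pmf (mu \<pi> t))" by (rule mu_fin[OF adm])
  have fin2: "finite (set_pmf (trans_pmf p r s a))" for s a
    using trans_supp[of s a] by (rule finite_subset) auto
  have "measure_pmf.expectation (nu \<pi> (Suc t)) f =
     (\<Sum>x\<in>set_pmf (mu \<pi> t). pmf (mu \<pi> t) x *\<^sub>R measure_pmf.expectation (trans_pmf p r (fst x) (snd x)) f)"
    unfolding nu_Suc using fin fin2 by (intro pmf_expectation_bind) auto
  also have "\<dots> = (\<Sum>x\<in>set_pmf (mu \<pi> t). pmf (mu \<pi> t) x *\<^sub>R (Q (snd x) * f 1 + (1 - Q (snd x)) * f (Suc (fst x))))"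
    using E_trans mu_supp[OF adm] by (intro sum.cong) auto
  also have "\<dots> = measure_pmf.expectation (mu \<pi> t) (\<lambda>x. Q (snd x) * f 1 + (1 - Q (snd x)) * f (Suc (fst x)))"
    using fin by (intro integral_measure_pmf[symmetric]) auto
  finally show ?thesis .
qed

lemma E_nu: "measure_pmf.expectation (nu \<pi> t) (f::nat\<Rightarrow>real) = measure_pmf.expectation (mu \<pi> t) (\<lambda>x. f (fst x))"
  unfolding nu_mu by (rule integral_map_pmf)

lemma cost_eq: "exp_cost p c r \<beta> \<epsilon> \<pi> t =
   measure_pmf.expectation (mu \<pi> t) (\<lambda>x. Cc (snd x) + be * (1 - Q (snd x)) * w (fst x))"
proof -
  have e: "(\<lambda>(s,a). imm_cost p c r \<beta> \<epsilon> s a) = (\<lambda>x. Cc (snd x) + be * (1 - Q (snd x)) * w (fst x))"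
    by (rule ext) (simp add: U_eq split: prod.splits)
  show ?thesis unfolding exp_cost_def mu_def e ..
qed

end

context mdp begin

lemma E_const: "measure_pmf.expectation M (\<lambda>_. x::real) = x"
  by simp

lemma lower_bound:
  assumes adm: "admissible N \<pi>"
    and bell: "\<forall>s. \<forall>a\<in>AA. g + h s \<le> Cc a + (1 - Q a) * (be * w s + h (Suc s))"
    and h1: "h 1 = 0" and hb: "\<forall>s. h s \<le> Ah * (real s ^ 2 - 1) + Bh" and Ah0: "0 \<le> Ah" and g0: "0 \<le> g"
  shows "ereal g \<le> avg_cost p c r \<beta> \<epsilon> \<pi>"
proof -
  have be0: "0 < be" using b0 e0 by simp
  define cst where "cst = exp_cost p c r \<beta> \<epsilon> \<pi>"
  define sq where "sq = (\<lambda>s::nat. real s ^ 2 - 1)"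
  let ?E = "measure_pmf.expectation"
  have int: "integrable (measure_pmf (mu \<pi> t)) f" for t and f :: "nat \<times> nat set \<Rightarrow> real"
    by (rule integrable_measure_pmf_finite[OF mu_fin[OF adm]])
  have step1: "g + ?E (nu \<pi> t) h \<le> cst t + ?E (nu \<pi> (Suc t)) h" for t
  proof -
    have "?E (nu \<pi> (Suc t)) h = ?E (mu \<pi> t) (\<lambda>x. (1 - Q (snd x)) * h (Suc (fst x)))"
      unfolding E_nu_Suc[OF adm] h1 by simp
    then have "cst t + ?E (nu \<pi> (Suc t)) h =
        ?E (mu \<pi> t) (\<lambda>x. Cc (snd x) + be * (1 - Q (snd x)) * w (fst x) + (1 - Q (snd x)) * h (Suc (fst x)))"
      unfolding cst_def cost_eq by (simp add: Bochner_Integration.integral_add[OF int int])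
    moreover have "?E (mu \<pi> t) (\<lambda>x. g + h (fst x)) \<le>
        ?E (mu \<pi> t) (\<lambda>x. Cc (snd x) + be * (1 - Q (snd x)) * w (fst x) + (1 - Q (snd x)) * h (Suc (fst x)))"
    proof (rule E_mono_fin[OF mu_fin[OF adm]])
      fix x assume "x \<in> set_pmf (mu \<pi> t)"
      then have "snd x \<in> AA" using mu_supp[OF adm] by blast
      then have "g + h (fst x) \<le> Cc (snd x) + (1 - Q (snd x)) * (be * w (fst x) + h (Suc (fst x)))"
        using bell by blast
      then show "g + h (fst x) \<le> Cc (snd x) + be * (1 - Q (snd x)) * w (fst x) + (1 - Q (snd x)) * h (Suc (fst x))"
        by (simp add: algebra_simps)
    qed
    moreover have "?E (mu \<pi> t) (\<lambda>x. g + h (fst x)) = g + ?E (nu \<pi> t) h"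
      unfolding E_nu by (simp add: Bochner_Integration.integral_add[OF int int])
    ultimately show ?thesis by linarith
  qed
  have step2: "be * ?E (nu \<pi> (Suc t)) sq \<le> cst t" for t
  proof -
    have e: "(\<lambda>x. Q (snd x) * sq 1 + (1 - Q (snd x)) * sq (Suc (fst x))) = (\<lambda>x. (1 - Q (snd x)) * w (fst x))"
      by (rule ext) (simp add: sq_def w_def power2_eq_square algebra_simps)
    have "be * ?E (nu \<pi> (Suc t)) sq = ?E (mu \<pi> t) (\<lambda>x. be * ((1 - Q (snd x)) * w (fst x)))"
      unfolding E_nu_Suc[OF adm] e by simp
    also have "\<dots> \<le> ?E (mu \<pi> t) (\<lambda>x. Cc (snd x) + be * (1 - Q (snd x)) * w (fst x))"
    proof (rule E_mono_fin[OF mu_fin[OF adm]])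
      fix x assume "x \<in> set_pmf (mu \<pi> t)"
      then have "snd x \<in> AA" using mu_supp[OF adm] by blast
      then show "be * ((1 - Q (snd x)) * w (fst x)) \<le> Cc (snd x) + be * (1 - Q (snd x)) * w (fst x)"
        using C_nonneg by simp
    qed
    finally show ?thesis unfolding cst_def cost_eq .
  qed
  have int2: "integrable (measure_pmf (nu \<pi> t)) f" for t and f :: "nat \<Rightarrow> real"
    by (rule integrable_measure_pmf_finite[OF nu_fin[OF adm]])
  have step3: "?E (nu \<pi> t) h \<le> Ah * ?E (nu \<pi> t) sq + Bh" for t
  proof -
    have "?E (nu \<pi> t) h \<le> ?E (nu \<pi> t) (\<lambda>s. Ah * sq s + Bh)"
      using hb by (intro E_mono_fin[OF nu_fin[OF adm]]) (simp add: sq_def)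
    also have "\<dots> = Ah * ?E (nu \<pi> t) sq + Bh"
      by (simp add: Bochner_Integration.integral_add[OF int2 int2])
    finally show ?thesis .
  qed
  have tele: "(\<Sum>t<T. cst t) \<ge> real T * g - ?E (nu \<pi> T) h" for T
  proof (induction T)
    case 0 then show ?case using h1 by (simp add: nu_0 One_nat_def)
  next
    case (Suc T) then show ?case using step1[of T] by (simp add: algebra_simps)
  qed
  have Bh0: "0 \<le> Bh" using hb[rule_format, of 1] h1 by simp
  have key: "\<forall>T. (\<Sum>t<Suc T. cst t) + (Ah / be) * cst T \<ge> real (Suc T) * g - Bh"
  proof
    fix T
    have "?E (nu \<pi> (Suc T)) sq \<le> cst T / be" using step2[of T] be0 by (simp add: pos_le_divide_eq mult.commute)
    then have "Ah * ?E (nu \<pi> (Suc T)) sq \<le> Ah * (cst T / be)" using Ah0 by (rule mult_left_mono)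
    then show "(\<Sum>t<Suc T. cst t) + (Ah / be) * cst T \<ge> real (Suc T) * g - Bh"
      using tele[of "Suc T"] step3[of "Suc T"] by simp
  qed
  define R where "R = (Ah / be) * g + Bh"
  have R0: "0 \<le> R" unfolding R_def using Ah0 be0 g0 Bh0 by simp
  have lb: "(\<Sum>t<T. cst t) \<ge> real T * g - R" for T
    using rec_bound[OF key _ R0[unfolded R_def]] Ah0 be0 unfolding R_def by simp
  have "(\<lambda>T. g - R / real T) \<longlonglongrightarrow> g - 0"
    by (rule tendsto_diff[OF tendsto_const lim_const_over_n])
  then have lim: "(\<lambda>T. ereal (g - R / real T)) \<longlonglongrightarrow> ereal g"
    by (intro tendsto_ereal) simp
  have ev: "eventually (\<lambda>T. ereal (g - R / real T) \<le> ereal ((\<Sum>t<T. cst t) / real T)) sequentially"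
  proof (rule eventually_sequentiallyI[of 1])
    fix T :: nat assume "1 \<le> T"
    then have Tp: "0 < real T" by simp
    have "g - R / real T = (real T * g - R) / real T" using Tp by (simp add: field_simps)
    also have "\<dots> \<le> (\<Sum>t<T. cst t) / real T" using lb[of T] Tp by (intro divide_right_mono) auto
    finally have "g - R / real T \<le> (\<Sum>t<T. cst t) / real T" .
    then show "ereal (g - R / real T) \<le> ereal ((\<Sum>t<T. cst t) / real T)" by simp
  qed
  have "ereal g = limsup (\<lambda>T. ereal (g - R / real T))"
    using lim by (intro lim_imp_Limsup[symmetric]) auto
  also have "\<dots> \<le> limsup (\<lambda>T. ereal ((\<Sum>t<T. cst t) / real T))"
    using ev by (rule Limsup_mono)
  finally show ?thesis unfolding avg_cost_def cst_def .
qed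

lemma upper_bound:
  assumes phiA: "\<forall>s. \<phi> s \<in> AA"
    and heq: "\<forall>s. g + h s = Cc (\<phi> s) + (1 - Q (\<phi> s)) * (be * w s + h (Suc s))"
    and h1: "h 1 = 0" and hmono: "\<forall>s. h s \<le> h (Suc s)"
  shows "admissible N (det_policy \<phi>) \<and> avg_cost p c r \<beta> \<epsilon> (det_policy \<phi>) \<le> ereal g"
proof -
  define \<pi> where "\<pi> = det_policy \<phi>"
  have adm: "admissible N \<pi>" using phiA by (auto simp: admissible_def \<pi>_def det_policy_def AA_def)
  define cst where "cst = exp_cost p c r \<beta> \<epsilon> \<pi>"
  let ?E = "measure_pmf.expectation"
  have int: "integrable (measure_pmf (mu \<pi> t)) f" for t and f :: "nat \<times> nat set \<Rightarrow> real"
    by (rule integrable_measure_pmf_finite[OF mu_fin[OF adm]])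
  have musupp: "snd x = \<phi> (fst x)" if "x \<in> set_pmf (mu \<pi> t)" for x t
    using that by (auto simp: mu_def \<pi>_def det_policy_def split_beta)
  have step1: "cst t + ?E (nu \<pi> (Suc t)) h \<le> g + ?E (nu \<pi> t) h" for t
  proof -
    have "?E (nu \<pi> (Suc t)) h = ?E (mu \<pi> t) (\<lambda>x. (1 - Q (snd x)) * h (Suc (fst x)))"
      unfolding E_nu_Suc[OF adm] h1 by simp
    then have "cst t + ?E (nu \<pi> (Suc t)) h =
        ?E (mu \<pi> t) (\<lambda>x. Cc (snd x) + be * (1 - Q (snd x)) * w (fst x) + (1 - Q (snd x)) * h (Suc (fst x)))"
      unfolding cst_def cost_eq by (simp add: Bochner_Integration.integral_add[OF int int])
    moreover have "?E (mu \<pi> t) (\<lambda>x. Cc (snd x) + be * (1 - Q (snd x)) * w (fst x) + (1 - Q (snd x)) * h (Suc (fst x)))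
        \<le> ?E (mu \<pi> t) (\<lambda>x. g + h (fst x))"
    proof (rule E_mono_fin[OF mu_fin[OF adm]])
      fix x assume "x \<in> set_pmf (mu \<pi> t)"
      then have "snd x = \<phi> (fst x)" by (rule musupp)
      then have "g + h (fst x) = Cc (snd x) + (1 - Q (snd x)) * (be * w (fst x) + h (Suc (fst x)))"
        using heq by simp
      then show "Cc (snd x) + be * (1 - Q (snd x)) * w (fst x) + (1 - Q (snd x)) * h (Suc (fst x)) \<le> g + h (fst x)"
        by (simp add: algebra_simps)
    qed
    moreover have "?E (mu \<pi> t) (\<lambda>x. g + h (fst x)) = g + ?E (nu \<pi> t) h"
      unfolding E_nu by (simp add: Bochner_Integration.integral_add[OF int int])
    ultimately show ?thesis by linarith
  qed
  have hpos: "0 \<le> h s" if "1 \<le> s" for s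
    using lift_Suc_mono_le[of h, OF hmono[rule_format] that] h1 by simp
  have Enn: "0 \<le> ?E (nu \<pi> T) h" for T
  proof -
    have "?E (nu \<pi> T) (\<lambda>_. 0) \<le> ?E (nu \<pi> T) h"
      using nu_supp[OF adm] hpos by (intro E_mono_fin[OF nu_fin[OF adm]]) auto
    then show ?thesis by simp
  qed
  have tele: "(\<Sum>t<T. cst t) \<le> real T * g - ?E (nu \<pi> T) h" for T
  proof (induction T)
    case 0 then show ?case using h1 by (simp add: nu_0 One_nat_def)
  next
    case (Suc T) then show ?case using step1[of T] by (simp add: algebra_simps)
  qed
  have ev: "eventually (\<lambda>T. ereal ((\<Sum>t<T. cst t) / real T) \<le> ereal g) sequentially"
  proof (rule eventually_sequentiallyI[of 1])
    fix T :: nat assume "1 \<le> T"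
    then have "(\<Sum>t<T. cst t) / real T \<le> g"
      using tele[of T] Enn[of T] by (simp add: field_simps)
    then show "ereal ((\<Sum>t<T. cst t) / real T) \<le> ereal g" by simp
  qed
  have "limsup (\<lambda>T. ereal ((\<Sum>t<T. cst t) / real T)) \<le> ereal g"
    using ev by (rule Limsup_bounded)
  then show ?thesis using adm unfolding avg_cost_def cst_def \<pi>_def by simp
qed

end


theorem proposition1:
  fixes N :: nat and p c r :: "nat \<Rightarrow> real" and \<beta> \<epsilon> :: real
  assumes "N \<ge> 1"
    and "\<forall>n\<in>{1..N}. 0 < p n \<and> p n \<le> 1"
    and "\<forall>n\<in>{1..N}. 0 \<le> c n"
    and "\<forall>n\<in>{1..N}. 0 < r n \<and> r n \<le> 1"
    and "0 < \<beta>" and "\<beta> < 1" and "0 < \<epsilon>"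
  shows "\<exists>\<phi> K b \<theta>. threshold_policy N \<phi> K b \<theta>
           \<and> (\<forall>\<pi>. admissible N \<pi> \<longrightarrow>
                 avg_cost p c r \<beta> \<epsilon> (det_policy \<phi>) \<le> avg_cost p c r \<beta> \<epsilon> \<pi>)
           \<and> (\<forall>k. 1 \<le> k \<and> k < K \<longrightarrow> succ_prob p r (b k) \<le> succ_prob p r (b (Suc k)))"
proof -
  interpret mdp N p c r \<beta> \<epsilon> using assms by unfold_locales auto
  obtain g h \<phi> M Ah Bh where g0: "0 \<le> g" and h1: "h 1 = 0" and hmono: "\<forall>s. h s \<le> h (Suc s)"
    and bell: "\<forall>s. \<forall>a\<in>AA. g + h s \<le> Cc a + (1 - Q a) * (be * w s + h (Suc s))"
    and heq: "\<forall>s. \<phi> s \<in> AA \<and> g + h s = Cc (\<phi> s) + (1 - Q (\<phi> s)) * (be * w s + h (Suc s))"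
    and M1: "1 \<le> M" and phM: "\<forall>s\<ge>M. \<phi> s = \<phi> M"
    and Qmono: "\<forall>s s'. 1 \<le> s \<longrightarrow> s \<le> s' \<longrightarrow> Q (\<phi> s) \<le> Q (\<phi> s')"
    and Ah0: "0 \<le> Ah" and hb: "\<forall>s. h s \<le> Ah * (real s ^ 2 - 1) + Bh"
    using part1 by blast
  have phiA: "\<forall>s. \<phi> s \<in> AA" using heq by blast
  have heq2: "\<forall>s. g + h s = Cc (\<phi> s) + (1 - Q (\<phi> s)) * (be * w s + h (Suc s))" using heq by blast
  have ub: "avg_cost p c r \<beta> \<epsilon> (det_policy \<phi>) \<le> ereal g"
    using upper_bound[OF phiA heq2 h1 hmono] by blast
  obtain K b \<theta> where thr: "thr_prop \<phi> K b \<theta>" using thr_exists[OF M1 phM] by blast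
  note TT = thr[unfolded thr_prop_def]
  have K1: "K \<ge> 1" using TT by (rule conjunct1)
  have t1: "\<theta> 1 = 1" using TT[THEN conjunct2, THEN conjunct1] .
  note stA = TT[THEN conjunct2, THEN conjunct2, THEN conjunct1]
  note bvA = TT[THEN conjunct2, THEN conjunct2, THEN conjunct2, THEN conjunct1]
  note ivA = TT[THEN conjunct2, THEN conjunct2, THEN conjunct2, THEN conjunct2]
  have "threshold_policy N \<phi> K b \<theta>"
    unfolding threshold_policy_def
  proof (intro conjI)
    show "1 \<le> K" by (rule K1)
    show "\<forall>k\<in>{1..K}. b k \<subseteq> {1..N}"
    proof
      fix k assume "k \<in> {1..K}"
      then have "b k = \<phi> (\<theta> k)" using bvA by blast
      then show "b k \<subseteq> {1..N}" using phiA by (simp add: AA_def)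
    qed
    show "\<forall>k. 1 \<le> k \<and> k < K \<longrightarrow> b k \<noteq> b (Suc k)" using stA by blast
    show "\<theta> 1 = 1" by (rule t1)
    show "\<forall>k. 1 \<le> k \<and> k < K \<longrightarrow> \<theta> k \<le> \<theta> (Suc k)" using stA by (blast intro: less_imp_le)
    show "\<forall>k\<in>{1..K}. \<forall>s\<ge>1. \<theta> k \<le> s \<and> (k < K \<longrightarrow> s < \<theta> (Suc k)) \<longrightarrow> \<phi> s = b k"
      by (rule ivA)
  qed
  moreover have "\<forall>\<pi>. admissible N \<pi> \<longrightarrow> avg_cost p c r \<beta> \<epsilon> (det_policy \<phi>) \<le> avg_cost p c r \<beta> \<epsilon> \<pi>"
  proof (intro allI impI)
    fix \<pi> assume adm: "admissible N \<pi>"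
    have "ereal g \<le> avg_cost p c r \<beta> \<epsilon> \<pi>" by (rule lower_bound[OF adm bell h1 hb Ah0 g0])
    then show "avg_cost p c r \<beta> \<epsilon> (det_policy \<phi>) \<le> avg_cost p c r \<beta> \<epsilon> \<pi>" using ub by simp
  qed
  moreover have "\<forall>k. 1 \<le> k \<and> k < K \<longrightarrow> succ_prob p r (b k) \<le> succ_prob p r (b (Suc k))"
  proof (intro allI impI)
    fix k assume k: "1 \<le> k \<and> k < K"
    have k1: "k \<in> {1..K}" and k2: "Suc k \<in> {1..K}" using k by auto
    have e1: "b k = \<phi> (\<theta> k) \<and> 1 \<le> \<theta> k" using bvA k1 by blast
    have e2: "b (Suc k) = \<phi> (\<theta> (Suc k))" using bvA k2 by blast
    have "\<theta> k < \<theta> (Suc k)" using stA k by blast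
    then have "Q (\<phi> (\<theta> k)) \<le> Q (\<phi> (\<theta> (Suc k)))" using Qmono e1 by simp
    then show "succ_prob p r (b k) \<le> succ_prob p r (b (Suc k))" using e1 e2 by simp
  qed
  ultimately show ?thesis by blast
qed

end
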